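(* Let $p$ be an odd prime and $n,k$ positive integers. Then $$\psi'(P^*(p^n,2^k))=\frac{p+1}{p^{2n+1}+1}+\frac{(p+1)(p^n-1)}{p^{2n+1}+1}\cdot\frac{(p+3)2^{2k-1}+p}{2^{2k+1}+1}.$$
   Context: For a finite group $G$, $\psi(G)=\sum_{x\in G} o(x)$ and $\psi'(G)=\psi(G)/\psi(\mathcal{C}_{|G|})$, where $\mathcal{C}_n$ is the cyclic group of order $n$. For an odd prime $p$ and positive integers $n,k$, $P^*(p^n,2^k)=A\rtimes\langle x\rangle$, where $A$ is elementary abelian of order $p^n$, $\langle x\rangle$ is cyclic of order $2^k$, and $x$ acts on $A$ by inversion $a\mapsto a^{-1}$. *)

theory Defs
  imports "HOL-Computational_Algebra.Primes" "HOL-Algebra.Multiplicative_Group" "HOL-Algebra.Elementary_Groups"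
begin

definition psi :: "('a, 'b) monoid_scheme \<Rightarrow> nat" where
  "psi G = (\<Sum>x\<in>carrier G. group.ord G x)"

definition psi' :: "('a, 'b) monoid_scheme \<Rightarrow> real" where
  "psi' G = real (psi G) / real (psi (integer_mod_group (order G)))"

text \<open>Concrete model of P*(p^n,2^k) = A \<rtimes> <x>: elements are pairs (a, i) with
  a \<in> (Z/p)^n (functions nat => int, coordinates j < n in {0..<p}, zero elsewhere)
  and i \<in> Z/2^k standing for x^i; x acts on A by inversion, so
  (a, x^i)(b, x^j) = (a + (-1)^i b, x^(i+j)).\<close>
definition Pstar :: "nat \<Rightarrow> nat \<Rightarrow> nat \<Rightarrow> ((nat \<Rightarrow> int) \<times> nat) monoid" where
  "Pstar p n k = \<lparr>
     carrier = {(a, i). (\<forall>j. (j < n \<longrightarrow> a j \<in> {0..<int p}) \<and> (j \<ge> n \<longrightarrow> a j = 0))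
                        \<and> i < 2 ^ k},
     monoid.mult = (\<lambda>(a, i) (b, j).
        ((\<lambda>t. if t < n then (a t + (-1) ^ i * b t) mod int p else 0), (i + j) mod 2 ^ k)),
     one = ((\<lambda>_. 0), 0) \<rparr>"

end

theory Submission
  imports Defs "HOL-Number_Theory.Number_Theory"
begin


definition Aset :: "nat \<Rightarrow> nat \<Rightarrow> (nat \<Rightarrow> int) set" where
  "Aset p n = {a. \<forall>j. (j < n \<longrightarrow> a j \<in> {0..<int p}) \<and> (j \<ge> n \<longrightarrow> a j = 0)}"

lemma carrier_Pstar: "carrier (Pstar p n k) = Aset p n \<times> {..<2^k}"
  by (auto simp: Pstar_def Aset_def)

lemma mult_Pstar: "(a, i) \<otimes>\<^bsub>Pstar p n k\<^esub> (b, j) =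
   ((\<lambda>t. if t < n then (a t + (-1) ^ i * b t) mod int p else 0), (i + j) mod 2 ^ k)"
  by (simp add: Pstar_def)

lemma one_Pstar: "\<one>\<^bsub>Pstar p n k\<^esub> = ((\<lambda>_. 0), 0)"
  by (simp add: Pstar_def)

lemma neg1_pow_mod: assumes "k > 0" shows "(-1::int) ^ (x mod 2 ^ k) = (-1) ^ x"
proof -
  have "even (x mod 2^k) \<longleftrightarrow> even x" using assms
    by (metis dvd_mod_iff dvd_power)
  then show ?thesis by (simp add: minus_one_power_iff)
qed

lemma modeq1: "((x mod (p::int)) + y) mod p = (x + y) mod p"
  by (simp add: mod_add_left_eq)
lemma modeq2: "(x + s * (y mod (p::int))) mod p = (x + s * y) mod p"
  by (metis mod_add_right_eq mod_mult_right_eq)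

lemma group_Pstar: assumes "p > 0" "k > 0" shows "group (Pstar p n k)"
proof (rule groupI)
  fix x y assume "x \<in> carrier (Pstar p n k)" "y \<in> carrier (Pstar p n k)"
  then show "x \<otimes>\<^bsub>Pstar p n k\<^esub> y \<in> carrier (Pstar p n k)"
    using assms by (cases x; cases y) (auto simp: carrier_Pstar mult_Pstar Aset_def)
next
  show "\<one>\<^bsub>Pstar p n k\<^esub> \<in> carrier (Pstar p n k)"
    using assms by (auto simp: carrier_Pstar one_Pstar Aset_def)
next
  fix x y z assume "x \<in> carrier (Pstar p n k)" "y \<in> carrier (Pstar p n k)" "z \<in> carrier (Pstar p n k)"
  obtain a i where x: "x = (a, i)" by force
  obtain b j where y: "y = (b, j)" by force
  obtain c l where z: "z = (c, l)" by force
  have e: "(-1::int) ^ ((i + j) mod 2 ^ k) = (-1)^i * (-1)^j"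
    using assms by (simp add: neg1_pow_mod power_add)
  show "x \<otimes>\<^bsub>Pstar p n k\<^esub> y \<otimes>\<^bsub>Pstar p n k\<^esub> z = x \<otimes>\<^bsub>Pstar p n k\<^esub> (y \<otimes>\<^bsub>Pstar p n k\<^esub> z)"
    unfolding x y z mult_Pstar e
    by (auto simp: fun_eq_iff modeq1 modeq2 algebra_simps mod_add_left_eq mod_add_right_eq)
next
  fix x assume "x \<in> carrier (Pstar p n k)"
  then show "\<one>\<^bsub>Pstar p n k\<^esub> \<otimes>\<^bsub>Pstar p n k\<^esub> x = x"
    by (cases x) (auto simp: carrier_Pstar mult_Pstar one_Pstar Aset_def fun_eq_iff)
next
  fix x assume xc: "x \<in> carrier (Pstar p n k)"
  obtain a i where x: "x = (a, i)" by force
  define y where "y = ((\<lambda>t. if t < n then (- ((-1)^i * a t)) mod int p else 0), (2^k - i) mod 2^k)"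
  have "y \<in> carrier (Pstar p n k)" using assms by (auto simp: y_def carrier_Pstar Aset_def)
  moreover have "y \<otimes>\<^bsub>Pstar p n k\<^esub> x = \<one>\<^bsub>Pstar p n k\<^esub>"
  proof -
    have i: "i < 2^k" using xc x by (auto simp: carrier_Pstar)
    have e: "(-1::int) ^ ((2^k - i) mod 2^k) = (-1)^i"
    proof -
      have "(-1::int) ^ ((2^k - i) mod 2^k) = (-1)^(2^k - i)" using assms by (simp add: neg1_pow_mod)
      also have "\<dots> = (-1)^i" using i assms
        by (simp add: minus_one_power_iff)
      finally show ?thesis .
    qed
    have "((2^k - i) mod 2^k + i) mod 2^k = (0::nat)" using i by (simp add: mod_add_left_eq)
    moreover have "\<And>z. ((- z) mod int p + z) mod int p = 0" by (simp add: mod_add_left_eq)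
    ultimately show ?thesis unfolding y_def x mult_Pstar one_Pstar e
      by (auto simp: fun_eq_iff)
  qed
  ultimately show "\<exists>y\<in>carrier (Pstar p n k). y \<otimes>\<^bsub>Pstar p n k\<^esub> x = \<one>\<^bsub>Pstar p n k\<^esub>" by blast
qed
lemma pow_Pstar:
  assumes k: "k > 0" and x: "(a, i) \<in> carrier (Pstar p n k)"
  shows "(a, i) [^]\<^bsub>Pstar p n k\<^esub> (m::nat) =
    ((\<lambda>t. if t < n then (int (if even i then m else m mod 2) * a t) mod int p else 0), (m * i) mod 2 ^ k)"
proof (induction m)
  case 0
  then show ?case by (simp add: one_Pstar fun_eq_iff)
next
  case (Suc m)
  have ar: "\<And>t. t < n \<Longrightarrow> a t mod int p = a t"
    using x by (auto simp: carrier_Pstar Aset_def)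
  have e: "(-1::int) ^ ((m * i) mod 2 ^ k) = (-1) ^ (m * i)" using k by (simp add: neg1_pow_mod)
  have md: "(m * i mod 2 ^ k + i) mod 2 ^ k = (Suc m * i) mod 2 ^ k"
    by (metis add.commute mod_add_left_eq mult_Suc)
  show ?case
  proof (cases "even i")
    case True
    then have e1: "(-1::int)^(m*i) = 1" by (simp add: minus_one_power_iff)
    have "\<And>t. ((int m * a t) mod int p + a t) mod int p = (int (Suc m) * a t) mod int p"
    proof -
      fix t
      have "int (Suc m) * a t = int m * a t + a t" by (simp add: distrib_right)
      then show "((int m * a t) mod int p + a t) mod int p = (int (Suc m) * a t) mod int p"
        by (simp only: mod_add_left_eq)
    qed
    then show ?thesis unfolding nat_pow_Suc Suc mult_Pstar e md e1 using True
      by (simp add: fun_eq_iff)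
  next
    case False
    then have e2: "(-1::int) ^ (m * i) = (-1) ^ m"
      by (simp add: minus_one_power_iff)
    show ?thesis
    proof (cases "even m")
      case True
      then have "m mod 2 = 0" "Suc m mod 2 = 1" by presburger+
      then show ?thesis unfolding nat_pow_Suc Suc mult_Pstar e md e2 using False True
        by (simp add: fun_eq_iff ar)
    next
      case mo: False
      then have "m mod 2 = 1" "Suc m mod 2 = 0" by presburger+
      have "\<And>t. (a t mod int p + - a t) mod int p = 0" by (simp add: mod_diff_left_eq)
      moreover have "\<And>t. (a t mod int p - a t) mod int p = 0" by (simp add: mod_diff_left_eq)
      ultimately show ?thesis unfolding nat_pow_Suc Suc mult_Pstar e md e2 using False mo \<open>m mod 2 = 1\<close> \<open>Suc m mod 2 = 0\<close>
        by (simp add: fun_eq_iff)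
    qed
  qed
qed

lemma dvd_mult_iff_div_gcd:
  fixes b m i :: nat assumes "b > 0"
  shows "b dvd m * i \<longleftrightarrow> (b div gcd i b) dvd m"
proof -
  define g where "g = gcd i b"
  have g: "g > 0" using assms by (simp add: g_def)
  obtain b' where b: "b = g * b'" by (metis g_def gcd_dvd2 dvdE)
  obtain i' where i: "i = g * i'" by (metis g_def gcd_dvd1 dvdE)
  have "gcd i b = g * gcd i' b'" by (simp add: b i gcd_mult_distrib_nat)
  then have "g * gcd i' b' = g * 1" by (metis g_def mult.right_neutral)
  then have "gcd i' b' = 1" using g by (metis mult_left_cancel not_gr0)
  then have cop: "coprime b' i'" by (metis coprime_iff_gcd_eq_1 gcd.commute)
  have mi: "m * i = g * (m * i')" by (simp add: i)
  have "b dvd m * i \<longleftrightarrow> g * b' dvd g * (m * i')" by (simp only: mi b)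
  also have "\<dots> \<longleftrightarrow> b' dvd m * i'" using g by simp
  also have "\<dots> \<longleftrightarrow> b' dvd m" using cop by (simp add: coprime_dvd_mult_left_iff)
  also have "b' = b div g" using g b by simp
  finally show ?thesis unfolding g_def .
qed

lemma pow_Pstar_one:
  assumes k: "k > 0" and x: "(a, i) \<in> carrier (Pstar p n k)"
  shows "(a, i) [^]\<^bsub>Pstar p n k\<^esub> (m::nat) = \<one>\<^bsub>Pstar p n k\<^esub> \<longleftrightarrow>
    (\<forall>t<n. (int (if even i then m else m mod 2) * a t) mod int p = 0) \<and> 2 ^ k dvd m * i"
  unfolding pow_Pstar[OF assms] one_Pstar
  by (auto simp: fun_eq_iff split: if_splits)

lemma ord_Pstar:
  assumes p: "prime p" "odd p" and k: "k > 0" and x: "(a, i) \<in> carrier (Pstar p n k)"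
  shows "group.ord (Pstar p n k) (a, i) =
    (if odd i then 2 ^ k else (if a = (\<lambda>_. 0) then 1 else p) * (2 ^ k div gcd i (2 ^ k)))"
proof -
  interpret G: group "Pstar p n k" using group_Pstar p k prime_gt_0_nat by blast
  have ar: "\<And>t. t < n \<Longrightarrow> 0 \<le> a t \<and> a t < int p" "\<And>t. t \<ge> n \<Longrightarrow> a t = 0"
    using x by (auto simp: carrier_Pstar Aset_def)
  show ?thesis
  proof (cases "odd i")
    case True
    have cop: "coprime (2^k) i" using True by simp
    have "(a, i) [^]\<^bsub>Pstar p n k\<^esub> m = \<one>\<^bsub>Pstar p n k\<^esub> \<longleftrightarrow> 2^k dvd m" for m :: nat
    proof -
      have c1: "2 ^ k dvd m * i \<longleftrightarrow> 2^k dvd m" using cop by (simp add: coprime_dvd_mult_left_iff)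
      have c2: "int (m mod 2) = 0" if h: "2^k dvd m"
      proof -
        have "(2::nat) dvd 2^k" using k by simp
        then have "2 dvd m" using h by (rule dvd_trans)
        then show "int (m mod 2) = 0" by simp
      qed
      have ie: "(if even i then m else m mod 2) = m mod 2" using True by simp
      show ?thesis unfolding pow_Pstar_one[OF k x] ie
      proof
        assume "(\<forall>t<n. int (m mod 2) * a t mod int p = 0) \<and> 2 ^ k dvd m * i"
        then show "2^k dvd m" using c1 by blast
      next
        assume h: "2^k dvd m"
        then have "\<forall>t<n. int (m mod 2) * a t mod int p = 0" using c2[OF h] by simp
        then show "(\<forall>t<n. int (m mod 2) * a t mod int p = 0) \<and> 2 ^ k dvd m * i" using c1 h by blast
      qed
    qed
    then have "G.ord (a, i) = 2 ^ k" using G.ord_unique[OF x] by blast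
    then show ?thesis using True by simp
  next
    case False
    have ie: "\<And>m. (if even i then m else m mod 2) = m" using False by simp
    define o2 where "o2 = 2 ^ k div gcd i (2 ^ k)"
    have o2d: "\<And>m. 2 ^ k dvd m * i \<longleftrightarrow> o2 dvd m" unfolding o2_def
      by (rule dvd_mult_iff_div_gcd) simp
    show ?thesis
    proof (cases "a = (\<lambda>_. 0)")
      case True
      have "(a, i) [^]\<^bsub>Pstar p n k\<^esub> m = \<one>\<^bsub>Pstar p n k\<^esub> \<longleftrightarrow> 1 * o2 dvd m" for m :: nat
      proof -
        have "\<forall>t<n. int m * a t mod int p = 0" using True by simp
        then show ?thesis unfolding pow_Pstar_one[OF k x] ie using o2d[of m] by simp
      qed
      then have "G.ord (a, i) = 1 * o2" using G.ord_unique[OF x] by blast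
      then show ?thesis using True False o2_def by simp
    next
      case az: False
      have "\<exists>t. a t \<noteq> 0"
      proof (rule ccontr)
        assume "\<not> (\<exists>t. a t \<noteq> 0)"
        then have "a = (\<lambda>_. 0)" by auto
        with az show False by simp
      qed
      then obtain t0 where t0: "a t0 \<noteq> 0" by blast
      have t0n: "t0 < n"
      proof (rule ccontr)
        assume "\<not> t0 < n"
        then have "a t0 = 0" using ar(2) by simp
        with t0 show False by simp
      qed
      have cop: "coprime p o2"
      proof -
        have "coprime p 2" using p(2) by simp
        then have c2k: "coprime p (2^k)" using coprime_power_right_iff[of p 2 k] by blast
        have o2dvd: "o2 dvd 2^k"
        proof -
          have gd: "gcd i (2^k) dvd (2::nat)^k" by simp
          have "o2 * gcd i (2^k) = 2^k" unfolding o2_def using gd by simp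
          then show "o2 dvd 2^k" by (metis dvd_triv_left)
        qed
        show ?thesis by (rule coprime_divisors[OF dvd_refl o2dvd c2k])
      qed
      have pi: "prime (int p)" using p by simp
      have "(a, i) [^]\<^bsub>Pstar p n k\<^esub> m = \<one>\<^bsub>Pstar p n k\<^esub> \<longleftrightarrow> p * o2 dvd m" for m :: nat
      proof -
        have F1: "(\<forall>t<n. (int m * a t) mod int p = 0) \<longleftrightarrow> p dvd m"
        proof
          assume h: "\<forall>t<n. (int m * a t) mod int p = 0"
          then have "(int m * a t0) mod int p = 0" using t0n by blast
          then have "int p dvd int m * a t0" by (rule mod_0_imp_dvd)
          moreover have "\<not> int p dvd a t0"
          proof
            assume "int p dvd a t0"
            moreover have "0 < a t0" using ar(1)[OF t0n] t0 by linarith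
            ultimately have "int p \<le> a t0" by (rule zdvd_imp_le)
            then show False using ar(1)[OF t0n] by linarith
          qed
          ultimately have "int p dvd int m" using pi prime_dvd_mult_iff by blast
          then show "p dvd m" by simp
        next
          assume "p dvd m"
          then have pm: "int p dvd int m" by simp
          show "\<forall>t<n. (int m * a t) mod int p = 0"
          proof (intro allI impI)
            fix t
            have "int p dvd int m * a t" using pm by (rule dvd_mult2)
            then show "(int m * a t) mod int p = 0" by (rule dvd_imp_mod_0)
          qed
        qed
        have F3: "p dvd m \<and> o2 dvd m \<longleftrightarrow> p * o2 dvd m"
          using cop divides_mult[of p m o2] dvd_mult_left[of p o2 m] dvd_mult_right[of p o2 m] by blast
        show ?thesis unfolding pow_Pstar_one[OF k x] ie by (simp only: F1 o2d F3)
      qed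
      then have "G.ord (a, i) = p * o2" using G.ord_unique[OF x] by blast
      then show ?thesis using az False o2_def by simp
    qed
  qed
qed


lemma alg1: fixes R X Tn U :: real
  assumes "U = Tn + R * X * (X * (R - 1))" "(R + 1) * Tn = R * X * X + 1"
  shows "(R + 1) * U = R ^ 3 * X * X + 1"
proof -
  have "(R + 1) * U = (R + 1) * Tn + R * X * X * (R * R - 1)" unfolding assms(1) by (simp add: algebra_simps)
  also have "\<dots> = R ^ 3 * X * X + 1" using assms(2) by (simp add: algebra_simps power3_eq_cube)
  finally show ?thesis .
qed
lemma pow_helpers: fixes R :: real shows "R ^ (2 * Suc e + 1) = R^3 * R^e * R^e" "R ^ (2*e+1) = R * R^e * R^e" "R ^ Suc e = R * R^e"
  by (simp_all add: power_add[symmetric] power_mult_distrib algebra_simps numeral_eq_Suc)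

definition S :: "nat \<Rightarrow> nat" where "S m = (\<Sum>y<m. m div gcd y m)"
definition T :: "nat \<Rightarrow> nat" where "T m = (\<Sum>d | d dvd m. d * totient d)"

lemma gcd_split_coprime:
  "coprime (a::nat) b \<Longrightarrow> d dvd a * b \<Longrightarrow> gcd d a * gcd d b = d"
  by (smt (verit) gcd.assoc gcd.bottom_left_bottom gcd.commute gcd_idem_nat
    gcd_mult_distrib_nat gcd_mult_left_right_cancel gcd_nat.absorb1
    is_unit_gcd mult.commute)

lemma gcd_prod_coprime:
  "coprime (a::nat) b \<Longrightarrow> x dvd a \<Longrightarrow> y dvd b \<Longrightarrow> gcd (x*y) a = x"
  by (metis coprime_divisors dvd_refl gcd_mult_left_right_cancel gcd_nat.orderE)

lemma T_mult:
  assumes cop: "coprime (a::nat) b" and a: "a > 0" and b: "b > 0"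
  shows "T (a * b) = T a * T b"
proof -
  define f where "f d = d * totient d" for d
  have "T (a * b) = (\<Sum>(x, y) \<in> {d. d dvd a} \<times> {d. d dvd b}. f (x * y))"
    unfolding T_def f_def
  proof (rule sum.reindex_bij_witness[where i = "\<lambda>(x, y). x * y" and j = "\<lambda>d. (gcd d a, gcd d b)"])
    fix d assume "d \<in> {d. d dvd a * b}"
    then show "(case (gcd d a, gcd d b) of (x, y) \<Rightarrow> x * y) = d"
      using gcd_split_coprime[OF cop] by auto
  next
    fix d assume "d \<in> {d. d dvd a * b}"
    then show "(gcd d a, gcd d b) \<in> {d. d dvd a} \<times> {d. d dvd b}" by auto
  next
    fix z assume z: "z \<in> {d. d dvd a} \<times> {d. d dvd b}"
    obtain x y where xy: "z = (x, y)" by force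
    have "gcd (x * y) a = x" using z xy gcd_prod_coprime[OF cop] by auto
    moreover have "gcd (x * y) b = y" using z xy gcd_prod_coprime[of b a y x] cop
      by (auto simp: coprime_commute mult.commute)
    ultimately show "(gcd (case z of (x, y) \<Rightarrow> x * y) a, gcd (case z of (x, y) \<Rightarrow> x * y) b) = z"
      using xy by simp
  next
    fix z assume z: "z \<in> {d. d dvd a} \<times> {d. d dvd b}"
    then show "(case z of (x, y) \<Rightarrow> x * y) \<in> {d. d dvd a * b}" by (auto intro: mult_dvd_mono)
  next
    fix d assume "d \<in> {d. d dvd a * b}"
    then show "(case (gcd d a, gcd d b) of (x, y) \<Rightarrow> x * y * totient (x * y)) = d * totient d"
      using gcd_split_coprime[OF cop] by auto
  qed
  also have "\<dots> = (\<Sum>(x, y) \<in> {d. d dvd a} \<times> {d. d dvd b}. f x * f y)"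
  proof (rule sum.cong[OF refl])
    fix z assume z: "z \<in> {d. d dvd a} \<times> {d. d dvd b}"
    obtain x y where xy: "z = (x, y)" by force
    have "coprime x y" using z xy cop coprime_divisors by auto
    then show "(case z of (x, y) \<Rightarrow> f (x * y)) = (case z of (x, y) \<Rightarrow> f x * f y)"
      using xy by (simp add: f_def totient_mult_coprime)
  qed
  also have "\<dots> = T a * T b"
    unfolding T_def f_def sum_product sum.cartesian_product by simp
  finally show ?thesis .
qed

lemma T_prime_power:
  fixes q :: nat
  assumes q: "prime q"
  shows "(real q + 1) * real (T (q ^ e)) = real q ^ (2 * e + 1) + 1"
proof (induction e)
  case 0
  then show ?case by (simp add: T_def)
next
  case (Suc e)
  have q1: "q > 1" using q prime_gt_1_nat by blast
  have h: "d = q ^ Suc e \<or> d dvd q ^ e" if "d dvd q ^ Suc e" for d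
  proof -
    have "\<exists>i\<le>Suc e. d = q ^ i" using that by (simp only: divides_primepow_nat[OF q])
    then obtain i where i: "i \<le> Suc e" "d = q ^ i" by auto
    show ?thesis
    proof (cases "i = Suc e")
      case True then show ?thesis using i by simp
    next
      case False then have "i \<le> e" using i by simp
      then show ?thesis using i(2) le_imp_power_dvd by blast
    qed
  qed
  have qe: "q ^ e dvd q ^ Suc e" by (rule le_imp_power_dvd) simp
  have set: "{d. d dvd q ^ Suc e} = insert (q ^ Suc e) {d. d dvd q ^ e}"
  proof (intro equalityI subsetI)
    fix d assume "d \<in> {d. d dvd q ^ Suc e}"
    then show "d \<in> insert (q ^ Suc e) {d. d dvd q ^ e}" using h[of d] by auto
  next
    fix d assume "d \<in> insert (q ^ Suc e) {d. d dvd q ^ e}"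
    then show "d \<in> {d. d dvd q ^ Suc e}" using dvd_trans[OF _ qe, of d] by auto
  qed
  have nin: "q ^ Suc e \<notin> {d. d dvd q ^ e}"
    using power_dvd_imp_le[of q "Suc e" e] q1 by auto
  have fin: "finite {d. d dvd q ^ e}" using q1 by simp
  have "T (q ^ Suc e) = q ^ Suc e * totient (q ^ Suc e) + T (q ^ e)"
    unfolding T_def set by (rule sum.insert[OF fin nin])
  then have "T (q ^ Suc e) = T (q ^ e) + q ^ Suc e * totient (q ^ Suc e)" by linarith
  also have "totient (q ^ Suc e) = q ^ e * (q - 1)" using totient_prime_power_Suc[OF q] .
  finally have "real (T (q ^ Suc e)) = real (T (q ^ e)) + real q ^ Suc e * (real q ^ e * (real q - 1))"
    using q1 by (simp add: of_nat_diff)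
  then have U: "real (T (q ^ Suc e)) = real (T (q ^ e)) + real q * real q ^ e * (real q ^ e * (real q - 1))"
    by (simp only: pow_helpers)
  have IH: "(real q + 1) * real (T (q ^ e)) = real q * real q ^ e * real q ^ e + 1"
    using Suc.IH by (simp only: pow_helpers)
  have "(real q + 1) * real (T (q ^ Suc e)) = real q ^ 3 * real q ^ e * real q ^ e + 1"
    by (rule alg1[OF U IH])
  also have "\<dots> = real q ^ (2 * Suc e + 1) + 1" by (subst pow_helpers(1)) (rule refl)
  finally show ?case .
qed

lemma S_T:
  assumes m: "m > 0" shows "S m = T m"
proof -
  define f where "f y = m div gcd y m" for y
  have f0: "f 0 = f m" by (simp add: f_def)
  have "S m = sum f {..<m}" by (simp add: S_def f_def)
  also have "{..<m} = insert 0 {0<..<m}" using m by auto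
  also have "sum f \<dots> = f m + sum f {0<..<m}" using f0 by simp
  also have "\<dots> = sum f {0<..m}"
  proof -
    have "{0<..m} = insert m {0<..<m}" using m by auto
    then show ?thesis by simp
  qed
  also have "\<dots> = (\<Sum>d\<in>{d. d dvd m}. sum f {y \<in> {0<..m}. gcd y m = d})"
    by (rule sum.group[symmetric]) (use m in auto)
  also have "\<dots> = (\<Sum>d\<in>{d. d dvd m}. totient (m div d) * (m div d))"
  proof (rule sum.cong[OF refl])
    fix d assume d: "d \<in> {d. d dvd m}"
    have "sum f {y \<in> {0<..m}. gcd y m = d} = sum (\<lambda>_. m div d) {y \<in> {0<..m}. gcd y m = d}"
      by (rule sum.cong) (auto simp: f_def)
    also have "\<dots> = totient (m div d) * (m div d)"
      using card_gcd_eq_totient[OF m] d by simp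
    finally show "sum f {y \<in> {0<..m}. gcd y m = d} = totient (m div d) * (m div d)" .
  qed
  also have "\<dots> = T m" unfolding T_def using m
    by (intro sum.reindex_bij_witness[of _ "(div) m" "(div) m"]) (auto elim: dvdE)
  finally show ?thesis .
qed


lemma alg2:
  fixes p X u :: real
  assumes p: "p > 0" and X: "X \<ge> 1" and u: "u > 0"
  shows "(X * u + (1 + p * (X - 1)) * ((u + 1) / 3)) / (((p * X * X + 1) / (p + 1)) * ((4 * u + 1) / 3))
    = (p + 1) / (p * X * X + 1) + ((p + 1) * (X - 1)) / (p * X * X + 1) * (((p + 3) * u + p) / (4 * u + 1))"
proof -
  define D where "D = p * X * X + 1"
  define C where "C = 4 * u + 1"
  define K where "K = C + (X - 1) * ((p + 3) * u + p)"
  have d1: "D > 0" using p X by (simp add: D_def add_pos_pos)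
  have d2: "C > 0" using u by (simp add: C_def)
  have d3: "p + 1 > 0" using p by simp
  have A: "X * u + (1 + p * (X - 1)) * ((u + 1) / 3) = K / 3"
    unfolding K_def C_def by (simp add: field_simps)
  have L: "(K / 3) / ((D / (p + 1)) * (C / 3)) = (p + 1) * K / (D * C)"
    using d1 d2 d3 by (simp add: field_simps)
  have R: "(p + 1) / D + ((p + 1) * (X - 1)) / D * (((p + 3) * u + p) / C) = (p + 1) * K / (D * C)"
    using d1 d2 d3 unfolding K_def by (simp add: field_simps)
  show ?thesis unfolding D_def[symmetric] C_def[symmetric] A L R ..
qed


lemma ord_integer_mod_group:
  assumes m: "m > 0" and y: "y < m"
  shows "group.ord (integer_mod_group m) (int y) = m div gcd y m"
proof -
  interpret G: group "integer_mod_group m" by simp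
  have yc: "int y \<in> carrier (integer_mod_group m)" using m y by (simp add: carrier_integer_mod_group)
  have "int y [^]\<^bsub>integer_mod_group m\<^esub> j = \<one>\<^bsub>integer_mod_group m\<^esub> \<longleftrightarrow> (m div gcd y m) dvd j" for j :: nat
  proof -
    have "int y [^]\<^bsub>integer_mod_group m\<^esub> j = (int j * int y) mod int m"
      by (rule pow_integer_mod_group)
    also have "\<dots> = int ((j * y) mod m)" by (simp add: zmod_int)
    finally have "int y [^]\<^bsub>integer_mod_group m\<^esub> j = \<one>\<^bsub>integer_mod_group m\<^esub> \<longleftrightarrow> m dvd j * y"
      by auto
    also have "\<dots> \<longleftrightarrow> (m div gcd y m) dvd j" using m by (rule dvd_mult_iff_div_gcd)
    finally show ?thesis .
  qed
  then show ?thesis using G.ord_unique[OF yc] by blast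
qed

lemma psi_cyclic:
  assumes m: "m > 0" shows "psi (integer_mod_group m) = S m"
proof -
  have c: "carrier (integer_mod_group m) = int ` {..<m}"
    using m by (auto simp: carrier_integer_mod_group image_iff intro!: bexI[where x="nat _"])
  have "psi (integer_mod_group m) = (\<Sum>x\<in>int ` {..<m}. group.ord (integer_mod_group m) x)"
    unfolding psi_def c ..
  also have "\<dots> = (\<Sum>y<m. group.ord (integer_mod_group m) (int y))"
    by (simp add: sum.reindex)
  also have "\<dots> = (\<Sum>y<m. m div gcd y m)"
    by (rule sum.cong) (auto simp: ord_integer_mod_group[OF m])
  finally show ?thesis by (simp add: S_def)
qed

lemma Aset_card: "card (Aset p n) = p ^ n"
proof -
  have "bij_betw (\<lambda>f. restrict f {..<n}) (Aset p n) (PiE {..<n} (\<lambda>_. {0..<int p}))"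
  proof (rule bij_betwI')
    fix f g assume f: "f \<in> Aset p n" and g: "g \<in> Aset p n"
    show "(restrict f {..<n} = restrict g {..<n}) = (f = g)"
    proof
      assume h: "restrict f {..<n} = restrict g {..<n}"
      show "f = g"
      proof
        fix j show "f j = g j"
        proof (cases "j < n")
          case True then show ?thesis using fun_cong[OF h, of j] by simp
        next
          case False then show ?thesis using f g by (simp add: Aset_def)
        qed
      qed
    next
      assume "f = g" then show "restrict f {..<n} = restrict g {..<n}" by simp
    qed
  next
    fix f assume f: "f \<in> Aset p n"
    show "restrict f {..<n} \<in> PiE {..<n} (\<lambda>_. {0..<int p})"
    proof (rule restrict_PiE_iff[THEN iffD2], intro ballI)
      fix j assume "j \<in> {..<n}" then show "f j \<in> {0..<int p}" using f by (simp add: Aset_def)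
    qed
  next
    fix g assume g: "g \<in> PiE {..<n} (\<lambda>_. {0..<int p})"
    define f where "f j = (if j < n then g j else 0)" for j
    have "f \<in> Aset p n"
    proof -
      have "\<forall>j. (j < n \<longrightarrow> f j \<in> {0..<int p}) \<and> (j \<ge> n \<longrightarrow> f j = 0)"
        using g by (simp add: f_def PiE_iff)
      then show ?thesis by (simp add: Aset_def)
    qed
    moreover have "g = restrict f {..<n}"
    proof
      fix j show "g j = restrict f {..<n} j"
        using g by (cases "j < n") (simp_all add: f_def PiE_iff extensional_def)
    qed
    ultimately show "\<exists>f\<in>Aset p n. g = restrict f {..<n}" by blast
  qed
  then have "card (Aset p n) = card (PiE {..<n} (\<lambda>_. {0..<int p}))" by (rule bij_betw_same_card)
  also have "\<dots> = p ^ n" by (simp add: card_PiE)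
  finally show ?thesis .
qed

lemma Aset_zero: "(\<lambda>_. 0) \<in> Aset p n \<longleftrightarrow> p > 0 \<or> n = 0"
  by (auto simp: Aset_def)

lemma sum_even_odd: "(\<Sum>i<2 * N. f i) = (\<Sum>j<N. f (2 * j) + f (2 * j + 1))" for f :: "nat \<Rightarrow> nat"
  by (induction N) (simp_all add: algebra_simps)

lemma inner_sum:
  assumes p: "prime p" "odd p" and k: "k > 0" and a: "a \<in> Aset p n"
  shows "(\<Sum>i<2^k. group.ord (Pstar p n k) (a, i)) =
    2 ^ (k - 1) * 2 ^ k + (if a = (\<lambda>_. 0) then 1 else p) * S (2 ^ (k - 1))"
proof -
  define M where "M = (2::nat) ^ (k - 1)"
  define c where "c = (if a = (\<lambda>_. 0) then 1 else p)"
  have M2: "(2::nat) ^ k = 2 * M" unfolding M_def using k by (cases k) auto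
  have "(\<Sum>i<2^k. group.ord (Pstar p n k) (a, i)) =
        (\<Sum>i<2^k. (if odd i then 2 ^ k else c * (2 ^ k div gcd i (2 ^ k))))"
    by (rule sum.cong) (auto simp: ord_Pstar[OF p k] carrier_Pstar a c_def)
  also have "\<dots> = (\<Sum>j<M. c * (2 ^ k div gcd (2 * j) (2 ^ k)) + 2 ^ k)"
    unfolding M2 sum_even_odd by simp
  also have "\<dots> = (\<Sum>j<M. c * (M div gcd j M) + 2 * M)"
  proof (rule sum.cong[OF refl])
    fix j
    have "gcd (2 * j) (2 * M) = 2 * gcd j M" by (simp add: gcd_mult_distrib_nat)
    then have "(2 * M) div gcd (2 * j) (2 * M) = M div gcd j M" by simp
    then show "c * (2 ^ k div gcd (2 * j) (2 ^ k)) + 2 ^ k = c * (M div gcd j M) + 2 * M"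
      unfolding M2 by simp
  qed
  also have "\<dots> = c * S M + M * (2 * M)"
    by (simp add: sum.distrib S_def sum_distrib_left)
  finally show ?thesis unfolding M2 c_def M_def by (simp add: algebra_simps)
qed

lemma psi_Pstar:
  assumes p: "prime p" "odd p" and k: "k > 0"
  shows "psi (Pstar p n k) = p ^ n * (2 ^ (k - 1) * 2 ^ k) + (1 + p * (p ^ n - 1)) * S (2 ^ (k - 1))"
proof -
  have p0: "p > 0" using p prime_gt_0_nat by blast
  have fin: "finite (Aset p n)" using Aset_card[of p n] p0 card_ge_0_finite by force
  have z: "(\<lambda>_. 0) \<in> Aset p n" using p0 by (simp add: Aset_zero)
  define c where "c a = (if a = (\<lambda>_. 0) then 1 else p)" for a :: "nat \<Rightarrow> int"
  have "psi (Pstar p n k) = (\<Sum>(a, i)\<in>Aset p n \<times> {..<2^k}. group.ord (Pstar p n k) (a, i))"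
    unfolding psi_def carrier_Pstar by (simp add: case_prod_beta)
  also have "\<dots> = (\<Sum>a\<in>Aset p n. \<Sum>i<2^k. group.ord (Pstar p n k) (a, i))"
    by (rule sum.cartesian_product[symmetric])
  also have "\<dots> = (\<Sum>a\<in>Aset p n. 2 ^ (k - 1) * 2 ^ k + c a * S (2 ^ (k - 1)))"
    by (rule sum.cong[OF refl]) (simp add: inner_sum[OF p k] c_def)
  also have "\<dots> = card (Aset p n) * (2 ^ (k - 1) * 2 ^ k) + (\<Sum>a\<in>Aset p n. c a) * S (2 ^ (k - 1))"
    by (simp add: sum.distrib sum_distrib_right)
  also have "(\<Sum>a\<in>Aset p n. c a) = 1 + p * (p ^ n - 1)"
  proof -
    have "(\<Sum>a\<in>Aset p n. c a) = c (\<lambda>_. 0) + (\<Sum>a\<in>Aset p n - {\<lambda>_. 0}. c a)"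
      using fin z by (rule sum.remove)
    also have "(\<Sum>a\<in>Aset p n - {\<lambda>_. 0}. c a) = (\<Sum>a\<in>Aset p n - {\<lambda>_. 0}. p)"
      by (rule sum.cong) (auto simp: c_def)
    also have "\<dots> = p * (p ^ n - 1)" using fin z by (simp add: Aset_card card_Diff_singleton)
    finally show ?thesis by (simp add: c_def)
  qed
  finally show ?thesis by (simp add: Aset_card)
qed

lemma order_Pstar: "order (Pstar p n k) = p ^ n * 2 ^ k"
  by (simp add: order_def carrier_Pstar card_cartesian_product Aset_card)


theorem proposition3p9:
  fixes p n k :: nat
  assumes "prime p" and "odd p" and "n > 0" and "k > 0"
  shows "psi' (Pstar p n k) =
     (real p + 1) / (real p ^ (2 * n + 1) + 1)
     + ((real p + 1) * (real p ^ n - 1)) / (real p ^ (2 * n + 1) + 1)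
       * (((real p + 3) * 2 ^ (2 * k - 1) + real p) / (2 ^ (2 * k + 1) + 1))"
proof -
  have p: "prime p" "odd p" using assms by auto
  have k: "k > 0" using assms by auto
  have p0: "p > 0" using p prime_gt_0_nat by blast
  have p2: "prime (2::nat)" by simp
  have cop: "coprime (p ^ n) (2 ^ k)"
  proof -
    have "coprime p 2" using p(2) by simp
    then show ?thesis by simp
  qed
  define X where "X = real p ^ n"
  define u where "u = (2::real) ^ (2 * k - 1)"
  have X1: "X \<ge> 1" unfolding X_def using p0 by simp
  have u0: "u > 0" unfolding u_def by simp
  have e1: "real p ^ (2 * n + 1) = real p * X * X" unfolding X_def
  proof -
    have "2 * n + 1 = Suc (n + n)" by simp
    then have "real p ^ (2 * n + 1) = real p * (real p ^ n * real p ^ n)"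
      by (simp only: power_Suc power_add)
    then show "real p ^ (2 * n + 1) = real p * real p ^ n * real p ^ n" by (simp add: mult.assoc)
  qed
  have e2: "(2::real) ^ (2 * k + 1) = 4 * u" unfolding u_def
  proof -
    have "2 * k + 1 = (2 * k - 1) + 2" using k by simp
    then show "(2::real) ^ (2 * k + 1) = 4 * 2 ^ (2 * k - 1)" by (simp only: power_add) simp
  qed
  have e3: "(2::real) ^ (2 * (k - 1) + 1) = u" unfolding u_def
  proof -
    have "2 * (k - 1) + 1 = 2 * k - 1" using k by simp
    then show "(2::real) ^ (2 * (k - 1) + 1) = 2 ^ (2 * k - 1)" by simp
  qed
  have e4: "real (p ^ n * (2 ^ (k - 1) * 2 ^ k)) = X * u" unfolding X_def u_def
  proof -
    have "(k - 1) + k = 2 * k - 1" using k by simp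
    then have "(2::real) ^ (k - 1) * 2 ^ k = 2 ^ (2 * k - 1)" by (metis power_add)
    then show "real (p ^ n * (2 ^ (k - 1) * 2 ^ k)) = real p ^ n * 2 ^ (2 * k - 1)" by simp
  qed
  have e5: "real (1 + p * (p ^ n - 1)) = 1 + real p * (X - 1)" unfolding X_def
    using p0 by (simp add: of_nat_diff)
  have Tp: "real (T (p ^ n)) = (real p * X * X + 1) / (real p + 1)"
    using T_prime_power[OF p(1), of n] e1 by (simp add: field_simps)
  have T2: "real (T (2 ^ k)) = (4 * u + 1) / 3"
    using T_prime_power[OF p2, of k] e2 by (simp add: field_simps)
  have T2': "real (T (2 ^ (k - 1))) = (u + 1) / 3"
    using T_prime_power[OF p2, of "k - 1"] e3 by (simp add: field_simps)
  have num: "real (psi (Pstar p n k)) = X * u + (1 + real p * (X - 1)) * ((u + 1) / 3)"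
  proof -
    have ST: "S (2 ^ (k - 1)) = T (2 ^ (k - 1))" by (rule S_T) simp
    have "real (psi (Pstar p n k)) = real (p ^ n * (2 ^ (k - 1) * 2 ^ k)) + real (1 + p * (p ^ n - 1)) * real (S (2 ^ (k - 1)))"
      by (simp only: psi_Pstar[OF p k] of_nat_add[symmetric] of_nat_mult[symmetric])
    also have "\<dots> = X * u + (1 + real p * (X - 1)) * ((u + 1) / 3)"
      by (simp only: e4 e5 ST T2')
    finally show ?thesis .
  qed
  have den: "real (psi (integer_mod_group (order (Pstar p n k)))) =
      ((real p * X * X + 1) / (real p + 1)) * ((4 * u + 1) / 3)"
  proof -
    have "psi (integer_mod_group (order (Pstar p n k))) = T (p ^ n * 2 ^ k)"
      unfolding order_Pstar using psi_cyclic[of "p ^ n * 2 ^ k"] S_T[of "p ^ n * 2 ^ k"] p0 by simp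
    also have "\<dots> = T (p ^ n) * T (2 ^ k)" using cop p0 by (simp add: T_mult)
    finally have h: "psi (integer_mod_group (order (Pstar p n k))) = T (p ^ n) * T (2 ^ k)" .
    show ?thesis by (simp only: h of_nat_mult Tp T2)
  qed
  have "psi' (Pstar p n k) = (X * u + (1 + real p * (X - 1)) * ((u + 1) / 3)) /
      (((real p * X * X + 1) / (real p + 1)) * ((4 * u + 1) / 3))"
    unfolding psi'_def num den ..
  also have "\<dots> = (real p + 1) / (real p * X * X + 1) + ((real p + 1) * (X - 1)) / (real p * X * X + 1)
      * (((real p + 3) * u + real p) / (4 * u + 1))"
    using p0 X1 u0 by (intro alg2) auto
  finally show ?thesis unfolding e1 e2 X_def[symmetric] u_def[symmetric] .
qed


end
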